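(* Let $M=D-A$ be an $n\times n$ SDDM matrix, where $D=\mathrm{diag}(d_1,\dots,d_n)$ is its diagonal, and let $\kappa=\max\{2,\kappa(D-A)\}$. Let $c=(1-1/\kappa)/\max_i d_i$. Then all eigenvalues of $c(D-A)$ lie in $[\frac{1}{2\kappa},2-\frac{1}{2\kappa}]$. Moreover, writing $c(D-A)=I-X$ with $X=I-c(D-A)$, all entries of $X$ are nonnegative and $\rho(X)\le 1-\frac{1}{2\kappa}$.
   Context: SDDM matrix: symmetric, positive definite, with nonpositive off-diagonal entries and $m_{ii}>\sum_{j\neq i}|m_{ij}|$ for all $i$. $\kappa(\cdot)$ is the condition number (ratio of largest to smallest singular value), and $\rho(\cdot)$ is the spectral radius. *)

theory Defs
  imports "Jordan_Normal_Form.Spectral_Radius"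
begin

definition SDDM :: "nat \<Rightarrow> real mat \<Rightarrow> bool" where
  "SDDM n M \<longleftrightarrow> M \<in> carrier_mat n n \<and> M\<^sup>T = M
     \<and> (\<forall>v \<in> carrier_vec n. v \<noteq> 0\<^sub>v n \<longrightarrow> v \<bullet> (M *\<^sub>v v) > 0)
     \<and> (\<forall>i<n. \<forall>j<n. i \<noteq> j \<longrightarrow> M $$ (i,j) \<le> 0)
     \<and> (\<forall>i<n. M $$ (i,i) > (\<Sum>j\<in>{0..<n} - {i}. \<bar>M $$ (i,j)\<bar>))"

definition singular_values :: "real mat \<Rightarrow> real set" where
  "singular_values A = sqrt ` {k. eigenvalue (A\<^sup>T * A) k}"

definition cond_num :: "real mat \<Rightarrow> real" where
  "cond_num A = Max (singular_values A) / Min (singular_values A)"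

end

theory Submission
  imports Defs
begin

lemma eig_iff:
  fixes A :: "'a::comm_ring_1 mat"
  assumes A: "A \<in> carrier_mat n n"
  shows "eigenvalue A k \<longleftrightarrow> (\<exists>v. (\<exists>l<n. v l \<noteq> 0) \<and> (\<forall>l<n. (\<Sum>m=0..<n. A$$(l,m) * v m) = k * v l))"
proof
  assume "eigenvalue A k"
  then obtain v where v: "v \<in> carrier_vec n" "v \<noteq> 0\<^sub>v n" "A *\<^sub>v v = k \<cdot>\<^sub>v v"
    using A unfolding eigenvalue_def eigenvector_def by auto
  have "\<exists>l<n. v $ l \<noteq> 0" using v(1,2) by (auto simp: vec_eq_iff)
  moreover have "\<forall>l<n. (\<Sum>m=0..<n. A$$(l,m) * v $ m) = k * v $ l"
  proof (intro allI impI)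
    fix l assume l: "l < n"
    have "(A *\<^sub>v v) $ l = (k \<cdot>\<^sub>v v) $ l" using v(3) by simp
    then show "(\<Sum>m=0..<n. A$$(l,m) * v $ m) = k * v $ l"
      using l A v(1) by (auto simp: scalar_prod_def row_def)
  qed
  ultimately show "\<exists>v. (\<exists>l<n. v l \<noteq> 0) \<and> (\<forall>l<n. (\<Sum>m=0..<n. A$$(l,m) * v m) = k * v l)"
    by (intro exI[of _ "\<lambda>l. v $ l"]) auto
next
  assume "\<exists>v. (\<exists>l<n. v l \<noteq> 0) \<and> (\<forall>l<n. (\<Sum>m=0..<n. A$$(l,m) * v m) = k * v l)"
  then obtain v where v: "\<exists>l<n. v l \<noteq> 0" "\<forall>l<n. (\<Sum>m=0..<n. A$$(l,m) * v m) = k * v l" by blast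
  let ?v = "vec n v"
  have "eigenvector A ?v k" unfolding eigenvector_def
    using A v by (auto simp: vec_eq_iff scalar_prod_def row_def)
  then show "eigenvalue A k" unfolding eigenvalue_def by blast
qed

lemma realify:
  fixes a :: "nat \<Rightarrow> nat \<Rightarrow> real" and v :: "nat \<Rightarrow> complex"
  assumes sym: "\<forall>l<n. \<forall>m<n. a l m = a m l"
  and nz: "\<exists>l<n. v l \<noteq> 0"
  and ev: "\<forall>l<n. (\<Sum>m=0..<n. of_real (a l m) * v m) = k * v l"
  shows "Im k = 0 \<and> (\<exists>u. (\<exists>l<n. u l \<noteq> 0) \<and> (\<forall>l<n. (\<Sum>m=0..<n. a l m * u m) = Re k * u l))"
proof -
  define x where "x l = Re (v l)" for l
  define y where "y l = Im (v l)" for l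
  have e1: "(\<Sum>m=0..<n. a l m * x m) = Re k * x l - Im k * y l" if "l < n" for l
  proof -
    have "Re (\<Sum>m=0..<n. of_real (a l m) * v m) = Re (k * v l)" using ev that by simp
    then show ?thesis by (simp add: Re_sum x_def y_def)
  qed
  have e2: "(\<Sum>m=0..<n. a l m * y m) = Im k * x l + Re k * y l" if "l < n" for l
  proof -
    have "Im (\<Sum>m=0..<n. of_real (a l m) * v m) = Im (k * v l)" using ev that by simp
    then show ?thesis by (simp add: Im_sum x_def y_def)
  qed
  have S: "(\<Sum>l=0..<n. x l * (\<Sum>m=0..<n. a l m * y m)) = (\<Sum>l=0..<n. y l * (\<Sum>m=0..<n. a l m * x m))"
  proof -
    have "(\<Sum>l=0..<n. x l * (\<Sum>m=0..<n. a l m * y m)) = (\<Sum>l=0..<n. \<Sum>m=0..<n. x l * a l m * y m)"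
      by (simp add: sum_distrib_left mult.assoc)
    also have "\<dots> = (\<Sum>m=0..<n. \<Sum>l=0..<n. x l * a l m * y m)" by (rule sum.swap)
    also have "\<dots> = (\<Sum>m=0..<n. y m * (\<Sum>l=0..<n. a m l * x l))"
      by (auto simp: sum_distrib_left intro!: sum.cong simp: sym mult_ac)
    finally show ?thesis .
  qed
  have L: "(\<Sum>l=0..<n. x l * (\<Sum>m=0..<n. a l m * y m)) = Im k * (\<Sum>l=0..<n. x l * x l) + Re k * (\<Sum>l=0..<n. x l * y l)"
  proof -
    have "(\<Sum>l=0..<n. x l * (\<Sum>m=0..<n. a l m * y m)) = (\<Sum>l=0..<n. x l * (Im k * x l + Re k * y l))"
      using e2 by (intro sum.cong) auto
    then show ?thesis by (simp add: sum_distrib_left sum.distrib algebra_simps)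
  qed
  have R: "(\<Sum>l=0..<n. y l * (\<Sum>m=0..<n. a l m * x m)) = Re k * (\<Sum>l=0..<n. x l * y l) - Im k * (\<Sum>l=0..<n. y l * y l)"
  proof -
    have "(\<Sum>l=0..<n. y l * (\<Sum>m=0..<n. a l m * x m)) = (\<Sum>l=0..<n. y l * (Re k * x l - Im k * y l))"
      using e1 by (intro sum.cong) auto
    then show ?thesis by (simp add: sum_distrib_left sum_subtractf algebra_simps)
  qed
  from S L R have Z: "Im k * (\<Sum>l=0..<n. x l * x l + y l * y l) = 0"
    by (simp add: sum.distrib algebra_simps)
  obtain l0 where l0: "l0 < n" "v l0 \<noteq> 0" using nz by blast
  have "x l0 \<noteq> 0 \<or> y l0 \<noteq> 0" using l0(2) by (auto simp: x_def y_def complex_eq_iff)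
  then have "x l0 * x l0 + y l0 * y l0 > 0" by (simp add: sum_squares_gt_zero_iff)
  moreover have "x l0 * x l0 + y l0 * y l0 \<le> (\<Sum>l=0..<n. x l * x l + y l * y l)"
    by (rule member_le_sum) (use l0 in auto)
  ultimately have pos: "(\<Sum>l=0..<n. x l * x l + y l * y l) > 0" by linarith
  with Z have imk: "Im k = 0" by simp
  show ?thesis
  proof (cases "x l0 = 0")
    case True
    then have "y l0 \<noteq> 0" using l0(2) unfolding x_def y_def by (simp add: complex_eq_iff)
    then show ?thesis using imk e2 l0(1) by (intro conjI exI[of _ y]) auto
  next
    case False
    then show ?thesis using imk e1 l0(1) by (intro conjI exI[of _ x]) auto
  qed
qed

lemma sddm_basic:
  assumes "SDDM n M"
  shows "M \<in> carrier_mat n n" "\<forall>l<n. \<forall>m<n. M$$(l,m) = M$$(m,l)"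
    "\<forall>u. (\<exists>l<n. u l \<noteq> 0) \<longrightarrow> (\<Sum>l=0..<n. u l * (\<Sum>m=0..<n. M$$(l,m) * u m)) > 0"
    "\<forall>i<n. \<forall>j<n. i \<noteq> j \<longrightarrow> M $$ (i,j) \<le> 0"
    "\<forall>i<n. M $$ (i,i) > (\<Sum>j\<in>{0..<n} - {i}. \<bar>M $$ (i,j)\<bar>)"
proof -
  note d = assms[unfolded SDDM_def]
  show C: "M \<in> carrier_mat n n" using d by blast
  show "\<forall>l<n. \<forall>m<n. M$$(l,m) = M$$(m,l)"
  proof (intro allI impI)
    fix l m assume "l < n" "m < n"
    then have "M\<^sup>T $$ (m,l) = M $$ (l,m)" using C by auto
    then show "M$$(l,m) = M$$(m,l)" using d by simp
  qed
  show "\<forall>u. (\<exists>l<n. u l \<noteq> 0) \<longrightarrow> (\<Sum>l=0..<n. u l * (\<Sum>m=0..<n. M$$(l,m) * u m)) > 0"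
  proof (intro allI impI)
    fix u :: "nat \<Rightarrow> real" assume "\<exists>l<n. u l \<noteq> 0"
    then have "vec n u \<noteq> 0\<^sub>v n" by (auto simp: vec_eq_iff)
    then have "vec n u \<bullet> (M *\<^sub>v vec n u) > 0" using d by auto
    then show "(\<Sum>l=0..<n. u l * (\<Sum>m=0..<n. M$$(l,m) * u m)) > 0"
      using C by (simp add: scalar_prod_def row_def)
  qed
  show "\<forall>i<n. \<forall>j<n. i \<noteq> j \<longrightarrow> M $$ (i,j) \<le> 0"
    "\<forall>i<n. M $$ (i,i) > (\<Sum>j\<in>{0..<n} - {i}. \<bar>M $$ (i,j)\<bar>)" using d by auto
qed

lemma eig_bounds:
  assumes S: "SDDM n M" and nz: "\<exists>l<n. u l \<noteq> 0"
    and ev: "\<forall>l<n. (\<Sum>m=0..<n. M$$(l,m) * u m) = lam * u l"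
  shows "0 < lam" "\<exists>i<n. lam < 2 * M$$(i,i)"
proof -
  note b = sddm_basic[OF S]
  have "(\<Sum>l=0..<n. u l * (\<Sum>m=0..<n. M$$(l,m) * u m)) > 0" using b(3) nz by blast
  also have "(\<Sum>l=0..<n. u l * (\<Sum>m=0..<n. M$$(l,m) * u m)) = lam * (\<Sum>l=0..<n. u l * u l)"
  proof -
    have "(\<Sum>l=0..<n. u l * (\<Sum>m=0..<n. M$$(l,m) * u m)) = (\<Sum>l=0..<n. u l * (lam * u l))"
      using ev by (intro sum.cong) auto
    then show ?thesis by (simp add: sum_distrib_left mult_ac)
  qed
  finally have p: "lam * (\<Sum>l=0..<n. u l * u l) > 0" .
  have "(\<Sum>l=0..<n. u l * u l) \<ge> 0" by (simp add: sum_nonneg)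
  with p show "0 < lam" by (simp add: zero_less_mult_iff)
  obtain l0 where l0: "l0 < n" "u l0 \<noteq> 0" using nz by blast
  define SS where "SS = (\<lambda>j. \<bar>u j\<bar>) ` {0..<n}"
  have fin: "finite SS" "SS \<noteq> {}" using l0 by (auto simp: SS_def)
  then have "Max SS \<in> SS" by (rule Max_in)
  then obtain i where i: "i < n" "\<bar>u i\<bar> = Max SS" by (auto simp: SS_def)
  have mx: "\<bar>u j\<bar> \<le> \<bar>u i\<bar>" if "j < n" for j
    using i(2) Max_ge[OF fin(1), of "\<bar>u j\<bar>"] that by (auto simp: SS_def)
  have ui: "\<bar>u i\<bar> > 0" using mx[OF l0(1)] l0(2) by linarith
  have split: "(\<Sum>m=0..<n. M$$(i,m) * u m) = M$$(i,i) * u i + (\<Sum>m\<in>{0..<n}-{i}. M$$(i,m) * u m)"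
    using i(1) by (subst sum.remove[of _ i]) auto
  have "(lam - M$$(i,i)) * u i = (\<Sum>m\<in>{0..<n}-{i}. M$$(i,m) * u m)"
    using ev i(1) split by (simp add: algebra_simps)
  then have "\<bar>lam - M$$(i,i)\<bar> * \<bar>u i\<bar> = \<bar>\<Sum>m\<in>{0..<n}-{i}. M$$(i,m) * u m\<bar>"
    by (metis abs_mult)
  also have "\<dots> \<le> (\<Sum>m\<in>{0..<n}-{i}. \<bar>M$$(i,m) * u m\<bar>)" by (rule sum_abs)
  also have "\<dots> \<le> (\<Sum>m\<in>{0..<n}-{i}. \<bar>M$$(i,m)\<bar> * \<bar>u i\<bar>)"
    by (rule sum_mono) (auto simp: abs_mult intro!: mult_left_mono mx)
  also have "\<dots> = (\<Sum>m\<in>{0..<n}-{i}. \<bar>M$$(i,m)\<bar>) * \<bar>u i\<bar>" by (simp add: sum_distrib_right)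
  also have "\<dots> < M$$(i,i) * \<bar>u i\<bar>" using b(5) i(1) ui by (intro mult_strict_right_mono) auto
  finally have "\<bar>lam - M$$(i,i)\<bar> < M$$(i,i)" using ui by (simp add: mult_less_cancel_right)
  then show "\<exists>i<n. lam < 2 * M$$(i,i)" using i(1) by (intro exI[of _ i]) auto
qed

fun wv :: "(nat \<Rightarrow> nat \<Rightarrow> real) \<Rightarrow> nat \<Rightarrow> nat \<Rightarrow> nat \<Rightarrow> nat \<Rightarrow> real" where
  "wv a n i 0 l = (if l = i then 1 else 0)"
| "wv a n i (Suc k) l = (\<Sum>m=0..<n. a l m * wv a n i k m)"

lemma wv_prod:
  assumes sym: "\<forall>l<n. \<forall>m<n. a l m = a m l" and i: "i < n"
  shows "(\<Sum>l=0..<n. wv a n i p l * wv a n i q l) = wv a n i (p+q) i"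
proof (induction p arbitrary: q)
  case 0
  have "(\<Sum>l=0..<n. wv a n i 0 l * wv a n i q l) = (\<Sum>l=0..<n. if l = i then wv a n i q l else 0)"
    by (intro sum.cong) auto
  then show ?case using i by simp
next
  case (Suc p)
  have "(\<Sum>l=0..<n. wv a n i (Suc p) l * wv a n i q l)
     = (\<Sum>l=0..<n. \<Sum>m=0..<n. a l m * wv a n i p m * wv a n i q l)"
    by (simp add: sum_distrib_right)
  also have "\<dots> = (\<Sum>m=0..<n. \<Sum>l=0..<n. a l m * wv a n i p m * wv a n i q l)"
    by (rule sum.swap)
  also have "\<dots> = (\<Sum>m=0..<n. wv a n i p m * wv a n i (Suc q) m)"
    by (auto simp: sum_distrib_left sym mult_ac intro!: sum.cong)
  also have "\<dots> = wv a n i (p + Suc q) i" by (rule Suc.IH)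
  finally show ?case by simp
qed

lemma wv_nz:
  assumes pd: "\<forall>u. (\<exists>l<n. u l \<noteq> 0) \<longrightarrow> (\<Sum>l=0..<n. u l * (\<Sum>m=0..<n. a l m * u m)) > 0"
    and i: "i < n"
  shows "\<exists>l<n. wv a n i k l \<noteq> 0"
proof (induction k)
  case 0
  then show ?case using i by auto
next
  case (Suc k)
  have "(\<Sum>l=0..<n. wv a n i k l * (\<Sum>m=0..<n. a l m * wv a n i k m)) > 0"
    using pd Suc.IH by blast
  show ?case
  proof (rule ccontr)
    assume "\<not> (\<exists>l<n. wv a n i (Suc k) l \<noteq> 0)"
    then have "\<forall>l<n. (\<Sum>m=0..<n. a l m * wv a n i k m) = 0" by simp
    then have "(\<Sum>l=0..<n. wv a n i k l * (\<Sum>m=0..<n. a l m * wv a n i k m)) = 0"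
      by (intro sum.neutral) auto
    with \<open>_ > 0\<close> show False by simp
  qed
qed

lemma cs_pos:
  fixes x y :: "nat \<Rightarrow> real"
  assumes A: "(\<Sum>l\<in>S. x l * x l) > 0"
  shows "(\<Sum>l\<in>S. x l * y l)^2 \<le> (\<Sum>l\<in>S. x l * x l) * (\<Sum>l\<in>S. y l * y l)"
proof -
  define AA where "AA = (\<Sum>l\<in>S. x l * x l)"
  define B where "B = (\<Sum>l\<in>S. x l * y l)"
  define C where "C = (\<Sum>l\<in>S. y l * y l)"
  define t where "t = B / AA"
  have "0 \<le> (\<Sum>l\<in>S. (t * x l - y l)^2)" by (simp add: sum_nonneg)
  also have "\<dots> = t^2 * AA - 2 * t * B + C"
    by (simp add: AA_def B_def C_def power2_eq_square algebra_simps sum.distrib sum_subtractf sum_distrib_left)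
  also have "\<dots> = C - B^2 / AA" using A unfolding t_def AA_def[symmetric]
    by (simp add: power2_eq_square field_simps)
  finally have "B^2 / AA \<le> C" by simp
  then have "B^2 \<le> C * AA" using A unfolding AA_def[symmetric] by (simp add: pos_divide_le_eq)
  then show ?thesis unfolding AA_def B_def C_def by (simp add: mult.commute)
qed

lemma wv_growth:
  assumes sym: "\<forall>l<n. \<forall>m<n. a l m = a m l" and i: "i < n"
    and pd: "\<forall>u. (\<exists>l<n. u l \<noteq> 0) \<longrightarrow> (\<Sum>l=0..<n. u l * (\<Sum>m=0..<n. a l m * u m)) > 0"
  shows "wv a n i (2*k) i \<ge> (a i i)^(2*k)"
proof -
  define F where "F m = wv a n i m i" for m
  have P: "(\<Sum>l=0..<n. wv a n i p l * wv a n i q l) = F (p+q)" for p q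
    unfolding F_def by (rule wv_prod[OF sym i])
  have pos: "F (2*j) > 0" for j
  proof -
    obtain l where l: "l < n" "wv a n i j l \<noteq> 0" using wv_nz[OF pd i] by blast
    have "wv a n i j l * wv a n i j l \<le> (\<Sum>l=0..<n. wv a n i j l * wv a n i j l)"
      by (rule member_le_sum) (use l in auto)
    moreover have "wv a n i j l * wv a n i j l > 0" using l by (metis not_real_square_gt_zero)
    moreover have "F (2*j) = (\<Sum>l=0..<n. wv a n i j l * wv a n i j l)"
      using P[of j j] by (simp only: mult_2)
    ultimately show ?thesis by linarith
  qed
  have cs: "F (2*j+2)^2 \<le> F (2*j) * F (2*j+4)" for j
  proof -
    have A: "(\<Sum>l=0..<n. wv a n i j l * wv a n i j l) = F (2*j)"
      using P[of j j] by (simp only: mult_2)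
    have B: "(\<Sum>l=0..<n. wv a n i j l * wv a n i (j+2) l) = F (2*j+2)"
    proof -
      have e: "j + (j+2) = 2*j+2" by simp
      show ?thesis using P[of j "j+2"] unfolding e .
    qed
    have C: "(\<Sum>l=0..<n. wv a n i (j+2) l * wv a n i (j+2) l) = F (2*j+4)"
    proof -
      have e: "(j+2) + (j+2) = 2*j+4" by simp
      show ?thesis using P[of "j+2" "j+2"] unfolding e .
    qed
    have "(\<Sum>l=0..<n. wv a n i j l * wv a n i (j+2) l)^2 \<le>
      (\<Sum>l=0..<n. wv a n i j l * wv a n i j l) * (\<Sum>l=0..<n. wv a n i (j+2) l * wv a n i (j+2) l)"
      by (rule cs_pos) (use pos[of j] A in simp)
    then show ?thesis unfolding A B C .
  qed
  have F0: "F 0 = 1" unfolding F_def by simp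
  have F1: "F 1 = a i i"
  proof -
    have "F 1 = (\<Sum>m=0..<n. a i m * wv a n i 0 m)" unfolding F_def One_nat_def by simp
    also have "\<dots> = (\<Sum>m=0..<n. if m = i then a i m else 0)" by (intro sum.cong) auto
    finally show ?thesis using i by simp
  qed
  have F2: "F 2 \<ge> (a i i)^2"
  proof -
    have A: "(\<Sum>l=0..<n. wv a n i 0 l * wv a n i 0 l) = F 0" using P[of 0 0] by (simp only: add_0)
    have B: "(\<Sum>l=0..<n. wv a n i 0 l * wv a n i 1 l) = F 1" using P[of 0 1] by (simp only: add_0)
    have e: "(1::nat) + 1 = 2" by simp
    have C: "(\<Sum>l=0..<n. wv a n i 1 l * wv a n i 1 l) = F 2" using P[of 1 1] unfolding e .
    have "(\<Sum>l=0..<n. wv a n i 0 l * wv a n i 1 l)^2 \<le>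
      (\<Sum>l=0..<n. wv a n i 0 l * wv a n i 0 l) * (\<Sum>l=0..<n. wv a n i 1 l * wv a n i 1 l)"
      by (rule cs_pos) (use F0 A in simp)
    then show ?thesis unfolding A B C F0 F1 by simp
  qed
  have step: "F (2*j+2) \<ge> (a i i)^2 * F (2*j)" for j
  proof (induction j)
    case 0
    then show ?case using F0 F2 by (simp add: eval_nat_numeral)
  next
    case (Suc j)
    have p0: "F (2*j) > 0" using pos[of j] .
    have p1: "F (2*j+2) > 0" using pos[of "Suc j"] by simp
    have "F (2*j) * ((a i i)^2 * F (2*j+2)) = ((a i i)^2 * F (2*j)) * F (2*j+2)" by simp
    also have "\<dots> \<le> F (2*j+2) * F (2*j+2)"
      using Suc.IH p1 by (intro mult_right_mono) auto
    also have "\<dots> \<le> F (2*j) * F (2*j+4)" using cs[of j] by (simp add: power2_eq_square)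
    finally have "(a i i)^2 * F (2*j+2) \<le> F (2*j+4)" using p0 by (simp add: mult_le_cancel_left_pos)
    moreover have "2 * Suc j + 2 = 2*j+4" "2 * Suc j = 2*j+2" by simp_all
    ultimately show ?case by (simp only:)
  qed
  have "F (2*k) \<ge> ((a i i)^2)^k"
  proof (induction k)
    case 0
    then show ?case using F0 by simp
  next
    case (Suc k)
    have "((a i i)^2)^Suc k = (a i i)^2 * ((a i i)^2)^k" by simp
    also have "\<dots> \<le> (a i i)^2 * F (2*k)" using Suc.IH by (simp add: mult_left_mono)
    also have "\<dots> \<le> F (2*k+2)" by (rule step)
    finally show ?case by simp
  qed
  then show ?thesis unfolding F_def by (simp add: power_mult)
qed

lemma pow_mat_Suc_left:
  assumes A: "A \<in> carrier_mat n n"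
  shows "A ^\<^sub>m Suc k = A * A ^\<^sub>m k"
proof (induction k)
  case 0
  then show ?case using A by simp
next
  case (Suc k)
  have "A ^\<^sub>m Suc (Suc k) = (A * A ^\<^sub>m k) * A" using Suc by simp
  also have "\<dots> = A * (A ^\<^sub>m k * A)" using A by (intro assoc_mult_mat) auto
  finally show ?case by simp
qed

lemma pow_wv:
  assumes N: "N \<in> carrier_mat n n" and i: "i < n"
  shows "l < n \<Longrightarrow> (N ^\<^sub>m k) $$ (l,i) = wv (\<lambda>l m. N$$(l,m)) n i k l"
proof (induction k arbitrary: l)
  case 0
  then show ?case using N i by simp
next
  case (Suc k)
  have "(N ^\<^sub>m Suc k) $$ (l,i) = (N * N ^\<^sub>m k) $$ (l,i)" using pow_mat_Suc_left[OF N] by simp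
  also have "\<dots> = (\<Sum>m=0..<n. N$$(l,m) * (N ^\<^sub>m k) $$ (m,i))"
    using N i Suc.prems by (simp add: scalar_prod_def row_def col_def)
  also have "\<dots> = wv (\<lambda>l m. N$$(l,m)) n i (Suc k) l"
    using Suc.IH by simp
  finally show ?case .
qed

lemma wv_cong:
  assumes "\<forall>l<n. \<forall>m<n. a l m = b l m"
  shows "l < n \<Longrightarrow> wv a n i k l = wv b n i k l"
proof (induction k arbitrary: l)
  case 0
  then show ?case by simp
next
  case (Suc k)
  then show ?case using assms by (auto intro!: sum.cong)
qed

lemma big_eig:
  assumes S: "SDDM n M" and i: "i < n"
  shows "\<exists>lam. eigenvalue M lam \<and> lam \<ge> M$$(i,i)"
proof (rule ccontr)
  assume H: "\<not> ?thesis"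
  note b = sddm_basic[OF S]
  define d where "d = M$$(i,i)"
  have d0: "d > 0" using b(5) i unfolding d_def
    by (smt (verit) sum_nonneg abs_ge_zero)
  define E where "E = {lam. eigenvalue M lam}"
  have finE: "finite E" using card_finite_spectrum(1)[OF b(1)] unfolding E_def spectrum_def .
  have Ed: "\<forall>x\<in>E. x < d" using H unfolding E_def d_def by force
  define m0 where "m0 = Max (insert 0 E)"
  have m0in: "m0 \<in> insert 0 E" unfolding m0_def using finE by (intro Max_in) auto
  have m0ge: "x \<le> m0" if "x \<in> E" for x unfolding m0_def using finE that by auto
  have m0nn: "m0 \<ge> 0" unfolding m0_def using finE by auto
  have m0d: "m0 < d" using m0in Ed d0 by auto
  define t where "t = (m0 + d) / 2"
  have t0: "t > 0" and td: "t < d" and Et: "\<forall>x\<in>E. x < t"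
    using m0nn m0d m0ge unfolding t_def by force+
  define a where "a l m = M$$(l,m) / t" for l m
  define N where "N = mat n n (\<lambda>(l,m). a l m)"
  have N: "N \<in> carrier_mat n n" unfolding N_def by simp
  define B where "B = map_mat complex_of_real N"
  have B: "B \<in> carrier_mat n n" unfolding B_def using N by simp
  have n0: "n > 0" using i by simp
  have symA: "\<forall>l<n. \<forall>m<n. a l m = a m l" using b(2) unfolding a_def by simp
  have pdA: "\<forall>u. (\<exists>l<n. u l \<noteq> 0) \<longrightarrow> (\<Sum>l=0..<n. u l * (\<Sum>m=0..<n. a l m * u m)) > 0"
  proof (intro allI impI)
    fix u :: "nat \<Rightarrow> real" assume "\<exists>l<n. u l \<noteq> 0"
    then have "(\<Sum>l=0..<n. u l * (\<Sum>m=0..<n. M$$(l,m) * u m)) > 0" using b(3) by blast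
    then have "(\<Sum>l=0..<n. u l * (\<Sum>m=0..<n. M$$(l,m) * u m)) / t > 0" using t0 by simp
    moreover have "(\<Sum>l=0..<n. u l * (\<Sum>m=0..<n. a l m * u m)) = (\<Sum>l=0..<n. u l * (\<Sum>m=0..<n. M$$(l,m) * u m)) / t"
      unfolding a_def by (simp add: sum_divide_distrib sum_distrib_left times_divide_eq_right)
    ultimately show "(\<Sum>l=0..<n. u l * (\<Sum>m=0..<n. a l m * u m)) > 0" by simp
  qed
  have sr: "spectral_radius B < 1"
  proof -
    obtain k where k: "k \<in> spectrum B" "spectral_radius B = norm k"
      using spectral_radius_mem_max(1)[OF B n0] by auto
    have "eigenvalue B k" using k(1) unfolding spectrum_def by simp
    then obtain v where v: "\<exists>l<n. v l \<noteq> 0" "\<forall>l<n. (\<Sum>m=0..<n. B$$(l,m) * v m) = k * v l"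
      unfolding eig_iff[OF B] by blast
    have v': "\<forall>l<n. (\<Sum>m=0..<n. of_real (a l m) * v m) = k * v l"
      using v(2) unfolding B_def N_def by simp
    from realify[OF symA v(1) v'] obtain u where
      imk: "Im k = 0" and u: "\<exists>l<n. u l \<noteq> 0" "\<forall>l<n. (\<Sum>m=0..<n. a l m * u m) = Re k * u l"
      by blast
    have u': "\<forall>l<n. (\<Sum>m=0..<n. M$$(l,m) * u m) = (t * Re k) * u l"
    proof (intro allI impI)
      fix l assume l: "l < n"
      have "(\<Sum>m=0..<n. M$$(l,m) * u m) = t * (\<Sum>m=0..<n. a l m * u m)"
        unfolding a_def using t0 by (simp add: sum_distrib_left)
      then show "(\<Sum>m=0..<n. M$$(l,m) * u m) = (t * Re k) * u l" using u(2) l by simp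
    qed
    have "eigenvalue M (t * Re k)" unfolding eig_iff[OF b(1)] using u(1) u' by blast
    then have "t * Re k \<in> E" unfolding E_def by simp
    then have "t * Re k < t" using Et by simp
    moreover have "0 < t * Re k" using eig_bounds(1)[OF S u(1) u'] .
    ultimately have "0 < Re k" "Re k < 1" using t0 by (simp_all add: zero_less_mult_iff)
    then show ?thesis using k(2) imk by (simp add: cmod_eq_Re)
  qed
  obtain as where "char_poly B = (\<Prod>a\<leftarrow>as. [:- a, 1:])" using char_poly_factorized[OF B] by blast
  from jordan_nf_exists[OF B this] have "\<exists>n_as. jordan_nf B n_as" .
  from spectral_radius_jnf_norm_bound_less_1[OF B sr this] obtain C where
    C: "\<forall>k. norm_bound (B ^\<^sub>m k) C" by blast
  have "1 < (d/t)^2" using td t0 d0 by (simp add: one_less_power)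
  from real_arch_pow[OF this] obtain k where kC: "C < ((d/t)^2)^k" by blast
  have "a i i = d / t" unfolding a_def d_def by simp
  have grow: "wv a n i (2*k) i \<ge> (d/t)^(2*k)" using wv_growth[OF symA i pdA, of k] \<open>a i i = d / t\<close> by simp
  have Npow: "(N ^\<^sub>m (2*k)) $$ (i,i) = wv a n i (2*k) i"
  proof -
    have "(N ^\<^sub>m (2*k)) $$ (i,i) = wv (\<lambda>l m. N$$(l,m)) n i (2*k) i" by (rule pow_wv[OF N i i])
    also have "\<dots> = wv a n i (2*k) i" using i by (intro wv_cong) (auto simp: N_def)
    finally show ?thesis .
  qed
  have "B ^\<^sub>m (2*k) = map_mat complex_of_real (N ^\<^sub>m (2*k))"
    unfolding B_def by (rule of_real_hom.mat_hom_pow[OF N, symmetric])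
  then have "(B ^\<^sub>m (2*k)) $$ (i,i) = complex_of_real (wv a n i (2*k) i)" using Npow N i by simp
  moreover have "norm ((B ^\<^sub>m (2*k)) $$ (i,i)) \<le> C" using C B i unfolding norm_bound_def by simp
  ultimately have "\<bar>wv a n i (2*k) i\<bar> \<le> C" by simp
  moreover have "(d/t)^(2*k) = ((d/t)^2)^k" by (simp add: power_mult)
  ultimately show False using grow kC by linarith
qed

lemma vec_self_pos:
  fixes w :: "real vec"
  assumes "w \<in> carrier_vec n" "w \<noteq> 0\<^sub>v n"
  shows "w \<bullet> w > 0"
proof -
  obtain l where l: "l < n" "w $ l \<noteq> 0" using assms by (auto simp: vec_eq_iff)
  have "w $ l * w $ l \<le> (\<Sum>i=0..<n. w $ i * w $ i)" by (rule member_le_sum) (use l in auto)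
  moreover have "w $ l * w $ l > 0" using l by (metis not_real_square_gt_zero)
  ultimately show ?thesis using assms(1) by (simp add: scalar_prod_def)
qed

lemma mm_pos:
  assumes S: "SDDM n M" and ev: "eigenvalue (M * M) mu"
  shows "mu > 0"
proof -
  have C: "M \<in> carrier_mat n n" and T: "M\<^sup>T = M"
    and pd: "\<forall>v \<in> carrier_vec n. v \<noteq> 0\<^sub>v n \<longrightarrow> v \<bullet> (M *\<^sub>v v) > 0"
    using S unfolding SDDM_def by auto
  obtain v where v: "v \<in> carrier_vec n" "v \<noteq> 0\<^sub>v n" "(M * M) *\<^sub>v v = mu \<cdot>\<^sub>v v"
    using ev C unfolding eigenvalue_def eigenvector_def by auto
  define w where "w = M *\<^sub>v v"
  have w: "w \<in> carrier_vec n" unfolding w_def using C v(1) by simp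
  have "w \<noteq> 0\<^sub>v n"
  proof
    assume "w = 0\<^sub>v n"
    then have "v \<bullet> (M *\<^sub>v v) = 0" unfolding w_def[symmetric] using v(1) by simp
    with pd v show False by auto
  qed
  then have wp: "w \<bullet> w > 0" using vec_self_pos w by blast
  have "v \<bullet> ((M * M) *\<^sub>v v) = v \<bullet> (M *\<^sub>v w)" unfolding w_def using C v by simp
  also have "\<dots> = (M\<^sup>T *\<^sub>v v) \<bullet> w" using transpose_vec_mult_scalar[OF C w v(1)] by simp
  also have "\<dots> = w \<bullet> w" unfolding T w_def ..
  finally have "mu * (v \<bullet> v) = w \<bullet> w" using v(3) v(1) by simp
  moreover have "v \<bullet> v > 0" using vec_self_pos v by blast
  ultimately show ?thesis using wp by (metis zero_less_mult_pos2 less_le)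
qed

lemma ev_sq:
  assumes C: "(M :: real mat) \<in> carrier_mat n n" and ev: "eigenvalue M lam"
  shows "eigenvalue (M * M) (lam^2)"
proof -
  obtain v where v: "v \<in> carrier_vec n" "v \<noteq> 0\<^sub>v n" "M *\<^sub>v v = lam \<cdot>\<^sub>v v"
    using ev C unfolding eigenvalue_def eigenvector_def by auto
  have "(M * M) *\<^sub>v v = M *\<^sub>v (M *\<^sub>v v)" using C v by simp
  also have "\<dots> = M *\<^sub>v (lam \<cdot>\<^sub>v v)" using v(3) by simp
  also have "\<dots> = lam \<cdot>\<^sub>v (M *\<^sub>v v)" by (rule mult_mat_vec[OF C v(1)])
  also have "\<dots> = lam \<cdot>\<^sub>v (lam \<cdot>\<^sub>v v)" using v(3) by simp
  also have "\<dots> = (lam^2) \<cdot>\<^sub>v v" by (simp add: power2_eq_square smult_smult_assoc)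
  finally show ?thesis unfolding eigenvalue_def eigenvector_def using C v by auto
qed

theorem mainTheorem3:
  fixes n :: nat and M D A X :: "real mat" and \<kappa> c :: real
  assumes "n > 0" and "SDDM n M"
  defines "D \<equiv> mat n n (\<lambda>(i,j). if i = j then M $$ (i,i) else 0)"
    and "A \<equiv> D - M"
    and "\<kappa> \<equiv> max 2 (cond_num (D - A))"
    and "c \<equiv> (1 - 1 / \<kappa>) / Max {M $$ (i,i) | i. i < n}"
    and "X \<equiv> 1\<^sub>m n - c \<cdot>\<^sub>m (D - A)"
  shows "(\<forall>k. eigenvalue (map_mat complex_of_real (c \<cdot>\<^sub>m (D - A))) k \<longrightarrow>
            k \<in> complex_of_real ` {1 / (2 * \<kappa>) .. 2 - 1 / (2 * \<kappa>)})
      \<and> (\<forall>i<n. \<forall>j<n. X $$ (i,j) \<ge> 0)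
      \<and> spectral_radius (map_mat complex_of_real X) \<le> 1 - 1 / (2 * \<kappa>)"
proof -
  note S = assms(2)
  note b = sddm_basic[OF S]
  have MC: "M \<in> carrier_mat n n" by (rule b(1))
  have DA: "D - A = M" unfolding A_def D_def by (intro eq_matI) (use MC in auto)
  have T: "M\<^sup>T = M" using S unfolding SDDM_def by auto
  define dm where "dm = Max {M $$ (i,i) | i. i < n}"
  have dset: "{M $$ (i,i) | i. i < n} = (\<lambda>i. M $$ (i,i)) ` {..<n}" by auto
  have dfin: "finite {M $$ (i,i) | i. i < n}" unfolding dset by simp
  have dne: "{M $$ (i,i) | i. i < n} \<noteq> {}" using assms(1) by auto
  have dge: "M $$ (i,i) \<le> dm" if "i < n" for i
    unfolding dm_def using that dfin by (intro Max_ge) auto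
  obtain i0 where i0: "i0 < n" "dm = M $$ (i0,i0)"
    using Max_in[OF dfin dne] unfolding dm_def by auto
  have dpos: "M $$ (i,i) > 0" if "i < n" for i
    using b(5) that by (smt (verit) sum_nonneg abs_ge_zero)
  have dm0: "dm > 0" using dpos[OF i0(1)] i0(2) by simp
  have k2: "\<kappa> \<ge> 2" unfolding \<kappa>_def by simp
  have kcond: "cond_num M \<le> \<kappa>" unfolding \<kappa>_def DA by simp
  have cdef: "c = (1 - 1/\<kappa>) / dm" unfolding c_def dm_def ..
  have c0: "c > 0" unfolding cdef using k2 dm0 by (simp add: field_simps)
  define SV where "SV = singular_values M"
  have SVdef: "SV = sqrt ` {k. eigenvalue (M * M) k}" unfolding SV_def singular_values_def T ..
  have MM: "M * M \<in> carrier_mat n n" using MC by simp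
  have SVfin: "finite SV" unfolding SVdef
    using card_finite_spectrum(1)[OF MM] unfolding spectrum_def by simp
  have SVpos: "s > 0" if "s \<in> SV" for s
    using that mm_pos[OF S] unfolding SVdef by auto
  have evSV: "lam \<in> SV" if "eigenvalue M lam" "lam > 0" for lam
  proof -
    have "eigenvalue (M * M) (lam^2)" by (rule ev_sq[OF MC that(1)])
    moreover have "sqrt (lam^2) = lam" using that(2) by simp
    ultimately show ?thesis unfolding SVdef by force
  qed
  have evpos: "lam > 0 \<and> lam \<le> 2 * dm" if evl: "eigenvalue M lam" for lam
  proof -
    obtain u where u: "\<exists>l<n. u l \<noteq> 0" "\<forall>l<n. (\<Sum>m=0..<n. M$$(l,m) * u m) = lam * u l"
      using evl unfolding eig_iff[OF MC] by blast
    obtain i where "i < n" "lam < 2 * M$$(i,i)" using eig_bounds(2)[OF S u] by blast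
    then show ?thesis using eig_bounds(1)[OF S u] dge[of i] by simp
  qed
  obtain lam0 where lam0: "eigenvalue M lam0" "lam0 \<ge> dm" using big_eig[OF S i0(1)] i0(2) by auto
  have lam0SV: "lam0 \<in> SV" using evSV[OF lam0(1)] lam0(2) dm0 by simp
  have SVne: "SV \<noteq> {}" using lam0SV by blast
  define smin where "smin = Min SV"
  define smax where "smax = Max SV"
  have smin0: "smin > 0" unfolding smin_def using Min_in[OF SVfin SVne] SVpos by blast
  have smaxdm: "smax \<ge> dm" unfolding smax_def using Max_ge[OF SVfin lam0SV] lam0(2) by simp
  have condeq: "cond_num M = smax / smin" unfolding cond_num_def smax_def smin_def SV_def ..
  have ksm: "\<kappa> * smin \<ge> smax" using kcond smin0 unfolding condeq by (simp add: pos_divide_le_eq)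
  have key: "1 / (2 * \<kappa>) \<le> c * lam \<and> c * lam \<le> 2 - 1 / (2 * \<kappa>)" if ev: "eigenvalue M lam" for lam
  proof -
    have lp: "lam > 0" "lam \<le> 2 * dm" using evpos[OF ev] by auto
    have lsv: "smin \<le> lam" unfolding smin_def using Min_le[OF SVfin evSV[OF ev lp(1)]] .
    have h1: "(\<kappa> - 1) * lam \<ge> smax - smin"
    proof -
      have "(\<kappa> - 1) * lam \<ge> (\<kappa> - 1) * smin" using lsv k2 by (intro mult_left_mono) auto
      then show ?thesis using ksm by (simp add: algebra_simps)
    qed
    have h2: "(\<kappa> - 1) * lam \<ge> lam" using k2 lp(1) by (simp add: algebra_simps)
    have h3: "2 * (\<kappa> - 1) * lam \<ge> dm" using h1 h2 lsv smaxdm by linarith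
    have ceq: "c * lam = (\<kappa> - 1) * lam / (\<kappa> * dm)" unfolding cdef using k2 dm0
      by (simp add: field_simps)
    have lo: "1 / (2 * \<kappa>) \<le> c * lam"
    proof -
      have "1 / (2 * \<kappa>) = (dm / 2) / (\<kappa> * dm)" using dm0 k2 by (simp add: field_simps)
      also have "\<dots> \<le> (\<kappa> - 1) * lam / (\<kappa> * dm)" using h3 dm0 k2
        by (intro divide_right_mono) (auto simp: algebra_simps)
      finally show ?thesis unfolding ceq .
    qed
    have hi: "c * lam \<le> 2 - 1 / (2 * \<kappa>)"
    proof -
      have "c * lam \<le> c * (2 * dm)" using lp c0 by (intro mult_left_mono) auto
      also have "\<dots> = 2 - 2 / \<kappa>" unfolding cdef using dm0 k2 by (simp add: field_simps)
      also have "\<dots> \<le> 2 - 1 / (2 * \<kappa>)" using k2 by (simp add: field_simps)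
      finally show ?thesis .
    qed
    show ?thesis using lo hi by simp
  qed
  have P1: "\<forall>k. eigenvalue (map_mat complex_of_real (c \<cdot>\<^sub>m (D - A))) k \<longrightarrow>
            k \<in> complex_of_real ` {1 / (2 * \<kappa>) .. 2 - 1 / (2 * \<kappa>)}"
  proof (intro allI impI)
    fix k assume "eigenvalue (map_mat complex_of_real (c \<cdot>\<^sub>m (D - A))) k"
    then have ek: "eigenvalue (map_mat complex_of_real (c \<cdot>\<^sub>m M)) k" unfolding DA .
    have car: "map_mat complex_of_real (c \<cdot>\<^sub>m M) \<in> carrier_mat n n" using MC by simp
    obtain v where v: "\<exists>l<n. v l \<noteq> 0"
      "\<forall>l<n. (\<Sum>m=0..<n. (map_mat complex_of_real (c \<cdot>\<^sub>m M))$$(l,m) * v m) = k * v l"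
      using ek unfolding eig_iff[OF car] by blast
    have v': "\<forall>l<n. (\<Sum>m=0..<n. of_real (c * M$$(l,m)) * v m) = k * v l"
      using v(2) MC by simp
    have sym: "\<forall>l<n. \<forall>m<n. c * M$$(l,m) = c * M$$(m,l)" using b(2) by simp
    from realify[OF sym v(1) v'] obtain u where
      imk: "Im k = 0" and u: "\<exists>l<n. u l \<noteq> 0" "\<forall>l<n. (\<Sum>m=0..<n. c * M$$(l,m) * u m) = Re k * u l"
      by blast
    have u': "\<forall>l<n. (\<Sum>m=0..<n. M$$(l,m) * u m) = (Re k / c) * u l"
    proof (intro allI impI)
      fix l assume l: "l < n"
      have "(\<Sum>m=0..<n. c * M$$(l,m) * u m) = c * (\<Sum>m=0..<n. M$$(l,m) * u m)"
        by (simp add: sum_distrib_left mult.assoc)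
      then show "(\<Sum>m=0..<n. M$$(l,m) * u m) = (Re k / c) * u l" using u(2) l c0
        by (simp add: field_simps)
    qed
    have "eigenvalue M (Re k / c)" unfolding eig_iff[OF MC] using u(1) u' by blast
    from key[OF this] have "Re k \<in> {1 / (2 * \<kappa>) .. 2 - 1 / (2 * \<kappa>)}" using c0 by simp
    moreover have "k = complex_of_real (Re k)" using imk by (simp add: complex_eq_iff)
    ultimately show "k \<in> complex_of_real ` {1 / (2 * \<kappa>) .. 2 - 1 / (2 * \<kappa>)}" by blast
  qed
  have Xent: "X $$ (l,m) = (if l = m then 1 else 0) - c * M$$(l,m)" if "l < n" "m < n" for l m
    unfolding X_def DA using that MC by simp
  have P2: "\<forall>i<n. \<forall>j<n. X $$ (i,j) \<ge> 0"
  proof (intro allI impI)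
    fix i j assume ij: "i < n" "j < n"
    show "X $$ (i,j) \<ge> 0"
    proof (cases "i = j")
      case True
      have "c * M$$(i,i) \<le> c * dm" using dge[OF ij(1)] c0 by simp
      also have "\<dots> = 1 - 1/\<kappa>" unfolding cdef using dm0 by simp
      also have "\<dots> \<le> 1" using k2 by simp
      finally show ?thesis using Xent[OF ij] True by simp
    next
      case False
      then have "M$$(i,j) \<le> 0" using b(4) ij by blast
      then show ?thesis using Xent[OF ij] False c0 by (simp add: mult_nonneg_nonpos)
    qed
  qed
  have P3: "spectral_radius (map_mat complex_of_real X) \<le> 1 - 1 / (2 * \<kappa>)"
  proof -
    have XC: "X \<in> carrier_mat n n" unfolding X_def DA by (intro minus_carrier_mat smult_carrier_mat MC)
    have car: "map_mat complex_of_real X \<in> carrier_mat n n" using XC by simp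
    obtain k where k: "k \<in> spectrum (map_mat complex_of_real X)"
      "spectral_radius (map_mat complex_of_real X) = norm k"
      using spectral_radius_mem_max(1)[OF car assms(1)] by auto
    have "eigenvalue (map_mat complex_of_real X) k" using k(1) unfolding spectrum_def by simp
    then obtain v where v: "\<exists>l<n. v l \<noteq> 0"
      "\<forall>l<n. (\<Sum>m=0..<n. (map_mat complex_of_real X)$$(l,m) * v m) = k * v l"
      unfolding eig_iff[OF car] by blast
    define a where "a l m = (if l = m then 1 else 0) - c * M$$(l,m)" for l m
    have v': "\<forall>l<n. (\<Sum>m=0..<n. of_real (a l m) * v m) = k * v l"
    proof (intro allI impI)
      fix l assume l: "l < n"
      have "(\<Sum>m=0..<n. of_real (a l m) * v m) = (\<Sum>m=0..<n. (map_mat complex_of_real X)$$(l,m) * v m)"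
        using l XC by (intro sum.cong refl) (simp add: Xent a_def)
      then show "(\<Sum>m=0..<n. of_real (a l m) * v m) = k * v l" using v(2) l by simp
    qed
    have sym: "\<forall>l<n. \<forall>m<n. a l m = a m l" using b(2) unfolding a_def by simp
    from realify[OF sym v(1) v'] obtain u where
      imk: "Im k = 0" and u: "\<exists>l<n. u l \<noteq> 0" "\<forall>l<n. (\<Sum>m=0..<n. a l m * u m) = Re k * u l"
      by blast
    have u': "\<forall>l<n. (\<Sum>m=0..<n. M$$(l,m) * u m) = ((1 - Re k) / c) * u l"
    proof (intro allI impI)
      fix l assume l: "l < n"
      have "(\<Sum>m=0..<n. a l m * u m) = (\<Sum>m=0..<n. (if l = m then u m else 0) - c * (M$$(l,m) * u m))"
        unfolding a_def by (intro sum.cong refl) (simp add: left_diff_distrib)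
      also have "\<dots> = (\<Sum>m=0..<n. (if l = m then u m else 0)) - c * (\<Sum>m=0..<n. M$$(l,m) * u m)"
        by (simp only: sum_subtractf sum_distrib_left)
      also have "(\<Sum>m=0..<n. (if l = m then u m else 0)) = u l" using l by simp
      finally show "(\<Sum>m=0..<n. M$$(l,m) * u m) = ((1 - Re k) / c) * u l" using u(2) l c0
        by (simp add: field_simps)
    qed
    have "eigenvalue M ((1 - Re k) / c)" unfolding eig_iff[OF MC] using u(1) u' by blast
    from key[OF this] have "1 / (2 * \<kappa>) \<le> 1 - Re k" "1 - Re k \<le> 2 - 1 / (2 * \<kappa>)" using c0 by simp_all
    then have "\<bar>Re k\<bar> \<le> 1 - 1 / (2 * \<kappa>)" by linarith
    then show ?thesis using k(2) imk by (simp add: cmod_eq_Re)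
  qed
  show ?thesis using P1 P2 P3 by blast
qed

end
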